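(* Let $\mathcal{H}$ be a complex Hilbert space and $B,C\in\mathcal{B}(\mathcal{H})$. Then $$w^2\left(\begin{bmatrix}0 & B\\ C & 0\end{bmatrix}\right)\ge \frac{1}{4\sqrt2}\Big[\|B+C^*\|^4+\|B-C^*\|^4\Big]^{1/2}\ge \frac14\max\left\{\big\||B|^2+|C^*|^2\big\|,\ \big\||B^*|^2+|C|^2\big\|\right\}.$$
   Context: $\mathcal{B}(\mathcal{H})$ is the algebra of bounded linear operators on $\mathcal{H}$ with operator norm $\|\cdot\|$. For $A\in\mathcal{B}(\mathcal{H})$, $A^*$ is the adjoint, $|A|=(A^*A)^{1/2}$, $|A^*|=(AA^* )^{1/2}$, and $w(A)=\sup_{\|x\|=1}|\langle Ax,x\rangle|$ is the numerical radius. The operator matrix $\begin{bmatrix}A&B\\C&D\end{bmatrix}$ acts on $\mathcal{H}\oplus\mathcal{H}$ by $(x_1,x_2)\mapsto(Ax_1+Bx_2,\,Cx_1+Dx_2)$; $0$ denotes the zero operator. *)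

theory Defs
  imports "HOL-Analysis.Analysis"
begin

text \<open>The library has only real inner product spaces,
so we introduce a class of complex inner product spaces which are complete
(Banach) in the norm induced by the inner product. The inner product is
linear in the first argument and conjugate linear in the second, matching
the paper's notation.\<close>

class complex_hilbert = banach +
  fixes scaleC :: "complex \<Rightarrow> 'a \<Rightarrow> 'a"
    and cinner :: "'a \<Rightarrow> 'a \<Rightarrow> complex"
  assumes scaleC_add_right: "scaleC a (x + y) = scaleC a x + scaleC a y"
    and scaleC_add_left: "scaleC (a + b) x = scaleC a x + scaleC b x"
    and scaleC_scaleC: "scaleC a (scaleC b x) = scaleC (a * b) x"
    and scaleC_one: "scaleC 1 x = x"
    and scaleR_scaleC: "scaleR r x = scaleC (complex_of_real r) x"
    and cinner_commute: "cinner x y = cnj (cinner y x)"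
    and cinner_add_left: "cinner (x + y) z = cinner x z + cinner y z"
    and cinner_scaleC_left: "cinner (scaleC a x) y = a * cinner x y"
    and cinner_self_real: "Im (cinner x x) = 0"
    and cinner_self_nonneg: "0 \<le> Re (cinner x x)"
    and cinner_self_eq_0: "cinner x x = 0 \<longleftrightarrow> x = 0"
    and norm_eq_sqrt_cinner: "norm x = sqrt (Re (cinner x x))"

definition bounded_op :: "('a::complex_hilbert \<Rightarrow> 'a) \<Rightarrow> bool" where
  "bounded_op A \<longleftrightarrow>
     (\<forall>x y. A (x + y) = A x + A y) \<and> (\<forall>a x. A (scaleC a x) = scaleC a (A x)) \<and>
     (\<exists>K. \<forall>x. norm (A x) \<le> norm x * K)"

definition adj :: "('a::complex_hilbert \<Rightarrow> 'a) \<Rightarrow> 'a \<Rightarrow> 'a" where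
  "adj A = (SOME B. \<forall>x y. cinner (A x) y = cinner x (B y))"

text \<open>Operator norm is the library's \<open>onorm\<close>.\<close>

text \<open>The Hilbert direct sum \<open>H \<oplus> H\<close>, modelled on pairs, with its inner product and norm.\<close>
definition inner2 :: "'a::complex_hilbert \<times> 'a \<Rightarrow> 'a \<times> 'a \<Rightarrow> complex" where
  "inner2 x y = cinner (fst x) (fst y) + cinner (snd x) (snd y)"

definition norm2 :: "'a::complex_hilbert \<times> 'a \<Rightarrow> real" where
  "norm2 x = sqrt (norm (fst x) ^ 2 + norm (snd x) ^ 2)"

definition opmatrix :: "('a::plus \<Rightarrow> 'a) \<Rightarrow> ('a \<Rightarrow> 'a) \<Rightarrow> ('a \<Rightarrow> 'a) \<Rightarrow> ('a \<Rightarrow> 'a)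
    \<Rightarrow> 'a \<times> 'a \<Rightarrow> 'a \<times> 'a" where
  "opmatrix A B C D = (\<lambda>(x1, x2). (A x1 + B x2, C x1 + D x2))"

definition numrad2 :: "('a::complex_hilbert \<times> 'a \<Rightarrow> 'a \<times> 'a) \<Rightarrow> real" where
  "numrad2 T = (SUP x\<in>{x. norm2 x = 1}. cmod (inner2 (T x) x))"

end

theory Submission
  imports Defs
begin


lemma cinner_zero_left[simp]: "cinner 0 (y::'a::complex_hilbert) = 0"
  using cinner_add_left[of "0::'a" 0 y] by simp
lemma cinner_minus_left[simp]: "cinner (- x) (y::'a::complex_hilbert) = - cinner x y"
  using cinner_add_left[of x "-x" y] by (metis add.commute neg_eq_iff_add_eq_0 add.right_inverse cinner_zero_left)
lemma cinner_diff_left: "cinner (x - z) (y::'a::complex_hilbert) = cinner x y - cinner z y"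
  using cinner_add_left[of x "-z" y] by simp
lemma cinner_add_right: "cinner x (y + z::'a::complex_hilbert) = cinner x y + cinner x z"
  by (metis cinner_commute cinner_add_left complex_cnj_add)
lemma cinner_zero_right[simp]: "cinner (x::'a::complex_hilbert) 0 = 0"
  by (metis cinner_commute cinner_zero_left complex_cnj_zero)
lemma cinner_minus_right[simp]: "cinner x (- y::'a::complex_hilbert) = - cinner x y"
  by (metis cinner_commute cinner_minus_left complex_cnj_minus)
lemma cinner_diff_right: "cinner x (y - z::'a::complex_hilbert) = cinner x y - cinner x z"
  by (metis cinner_commute cinner_diff_left complex_cnj_diff)
lemma cinner_scaleC_right: "cinner x (scaleC a (y::'a::complex_hilbert)) = cnj a * cinner x y"
  by (metis cinner_commute cinner_scaleC_left complex_cnj_mult)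
lemma cinner_scaleR_left: "cinner (scaleR r x) (y::'a::complex_hilbert) = of_real r * cinner x y"
  by (simp add: scaleR_scaleC cinner_scaleC_left)
lemma cinner_scaleR_right: "cinner x (scaleR r (y::'a::complex_hilbert)) = of_real r * cinner x y"
  by (simp add: scaleR_scaleC cinner_scaleC_right)
lemma cinner_self: "cinner x (x::'a::complex_hilbert) = of_real (norm x ^ 2)"
proof -
  have "Re (cinner x x) = norm x ^ 2" using norm_eq_sqrt_cinner[of x] cinner_self_nonneg[of x] by simp
  then show ?thesis using cinner_self_real[of x] by (simp add: complex_eq_iff)
qed
lemma scaleC_zero_left[simp]: "scaleC 0 (x::'a::complex_hilbert) = 0"
  using scaleR_scaleC[of 0 x] by simp
lemma scaleC_minus1: "scaleC (-1) (x::'a::complex_hilbert) = - x"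
  using scaleR_scaleC[of "-1" x] by simp
lemma scaleC_zero_right[simp]: "scaleC a (0::'a::complex_hilbert) = 0"
  using scaleC_add_right[of a "0::'a" 0] by simp
lemma norm_scaleC: "norm (scaleC a (x::'a::complex_hilbert)) = cmod a * norm x"
proof -
  have "cinner (scaleC a x) (scaleC a x) = (a * cnj a) * cinner x x"
    by (simp add: cinner_scaleC_left cinner_scaleC_right mult.assoc)
  also have "\<dots> = of_real ((cmod a)^2 * norm x ^ 2)" by (simp only: complex_norm_square[symmetric] cinner_self of_real_mult)
  finally have "of_real (norm (scaleC a x) ^ 2) = (of_real ((cmod a * norm x)^2) :: complex)" by (simp add: cinner_self power_mult_distrib)
  then have "norm (scaleC a x) ^ 2 = (cmod a * norm x)^2" by (simp only: of_real_eq_iff)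
  then show ?thesis by (simp add: power2_eq_iff_nonneg)
qed

lemma proj_expand:
  fixes x y :: "'a::complex_hilbert"
  assumes "y \<noteq> 0"
  shows "norm (x - scaleC (cinner x y / of_real (norm y ^ 2)) y) ^ 2
         = norm x ^ 2 - (cmod (cinner x y))^2 / norm y ^ 2"
proof -
  define c where "c = cinner x y"
  define n where "n = norm y ^ 2"
  have n: "n > 0" using assms by (simp add: n_def)
  have cxx: "cinner x x = of_real (norm x ^2)" by (rule cinner_self)
  have cyy: "cinner y y = of_real n" unfolding n_def by (rule cinner_self)
  have cyx: "cinner y x = cnj c" by (simp add: c_def cinner_commute[of y x])
  have "of_real (norm (x - scaleC (c / of_real n) y) ^ 2) = cinner (x - scaleC (c / of_real n) y) (x - scaleC (c / of_real n) y)"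
    by (simp add: cinner_self)
  also have "\<dots> = of_real (norm x ^2) - cnj (c / of_real n) * c - (c / of_real n) * cnj c + (c / of_real n) * cnj (c / of_real n) * of_real n"
    by (simp add: cinner_diff_left cinner_diff_right cinner_scaleC_left cinner_scaleC_right cxx cyy cyx c_def[symmetric] algebra_simps)
  also have "\<dots> = of_real (norm x ^2) - (c * cnj c) / of_real n"
    using n by (simp add: field_simps)
  also have "\<dots> = of_real (norm x ^ 2 - (cmod c)^2 / n)"
    by (simp only: complex_norm_square of_real_diff of_real_divide)
  finally show ?thesis unfolding c_def n_def of_real_eq_iff by simp
qed

lemma cauchy_schwarz: "cmod (cinner x y) \<le> norm x * norm (y::'a::complex_hilbert)"
proof (cases "y = 0")
  case True then show ?thesis by simp
next
  case False
  from proj_expand[OF False, of x] have "(cmod (cinner x y))^2 / norm y ^ 2 \<le> norm x ^ 2"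
    by (metis diff_ge_0_iff_ge zero_le_power2)
  then have "(cmod (cinner x y))^2 \<le> (norm x * norm y)^2" using False
    by (simp add: field_simps power_mult_distrib)
  then show ?thesis by (simp add: power2_le_iff_abs_le)
qed



lemma parallelogram: "norm (a + b) ^ 2 + norm (a - b) ^ 2 = 2 * norm a ^ 2 + 2 * norm (b::'a::complex_hilbert) ^ 2"
proof -
  have "(of_real (norm (a + b) ^ 2 + norm (a - b) ^ 2) :: complex) = cinner (a+b) (a+b) + cinner (a-b) (a-b)"
    by (simp add: cinner_self)
  also have "\<dots> = 2 * cinner a a + 2 * cinner b b"
    by (simp add: cinner_add_left cinner_add_right cinner_diff_left cinner_diff_right)
  also have "\<dots> = of_real (2 * norm a ^ 2 + 2 * norm b ^ 2)" by (simp add: cinner_self)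
  finally show ?thesis by (simp only: of_real_eq_iff)
qed

lemma riesz:
  fixes f :: "'a::complex_hilbert \<Rightarrow> complex"
  assumes add: "\<And>x y. f (x+y) = f x + f y" and hom: "\<And>a x. f (scaleC a x) = a * f x"
    and bnd: "\<And>x. cmod (f x) \<le> K * norm x"
  shows "\<exists>z. \<forall>x. f x = cinner x z"
proof (cases "\<forall>x. f x = 0")
  case True then show ?thesis by (intro exI[of _ 0]) simp
next
  case False
  then obtain x0 where fx0: "f x0 \<noteq> 0" by auto
  have f0: "f 0 = 0" using hom[of 0 0] by simp
  have fdiff: "f (x - y) = f x - f y" for x y using add[of "x - y" y] by simp
  have fR: "f (scaleR r x) = of_real r * f x" for r x by (simp add: scaleR_scaleC hom)
  define M where "M = {m. f m = 0}"
  define Ds where "Ds = (\<lambda>m. norm (x0 - m)^2) ` M"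
  define D where "D = Inf Ds"
  have Dsne: "Ds \<noteq> {}" using f0 by (auto simp: Ds_def M_def)
  have Dsbdd: "bdd_below Ds" unfolding Ds_def by (rule bdd_belowI[of _ 0]) auto
  have Dle: "D \<le> norm (x0 - m)^2" if "m \<in> M" for m
    unfolding D_def by (rule cInf_lower[OF _ Dsbdd]) (use that in \<open>auto simp: Ds_def\<close>)
  have "\<forall>n. \<exists>m\<in>M. norm (x0 - m)^2 < D + inverse (real (Suc n))"
  proof
    fix n
    have "Inf Ds < D + inverse (real (Suc n))" by (simp add: D_def)
    from cInf_lessD[OF Dsne this] show "\<exists>m\<in>M. norm (x0 - m)^2 < D + inverse (real (Suc n))"
      by (auto simp: Ds_def)
  qed
  then obtain ms where msM: "\<And>n. ms n \<in> M" and msD: "\<And>n. norm (x0 - ms n)^2 < D + inverse (real (Suc n))"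
    by metis
  have cb: "norm (ms n - ms k)^2 \<le> 2 * inverse (real (Suc n)) + 2 * inverse (real (Suc k))" for n k
  proof -
    define mid where "mid = scaleR (1/2) (ms n + ms k)"
    have "mid \<in> M" using msM[of n] msM[of k] by (simp add: M_def mid_def fR add)
    then have "D \<le> norm (x0 - mid)^2" by (rule Dle)
    have "(x0 - ms k) + (x0 - ms n) = scaleR 2 (x0 - mid)" by (simp add: mid_def algebra_simps scaleR_2)
    then have "norm ((x0 - ms k) + (x0 - ms n))^2 = 4 * norm (x0 - mid)^2"
      by (simp add: power_mult_distrib)
    moreover have "norm ((x0 - ms k) - (x0 - ms n))^2 = norm (ms n - ms k)^2" by simp
    moreover note parallelogram[of "x0 - ms k" "x0 - ms n"]
    ultimately show ?thesis using msD[of n] msD[of k] \<open>D \<le> norm (x0 - mid)^2\<close> by linarith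
  qed
  have "Cauchy ms"
  proof (rule CauchyI)
    fix e :: real assume e: "0 < e"
    obtain N where N: "inverse (real (Suc N)) < e^2 / 4"
      using reals_Archimedean[of "e^2/4"] e by auto
    show "\<exists>N. \<forall>m\<ge>N. \<forall>n\<ge>N. norm (ms m - ms n) < e"
    proof (intro exI[of _ N] allI impI)
      fix m n assume mn: "N \<le> m" "N \<le> n"
      have i1: "inverse (real (Suc m)) \<le> inverse (real (Suc N))" using mn by (simp add: le_imp_inverse_le)
      have i2: "inverse (real (Suc n)) \<le> inverse (real (Suc N))" using mn by (simp add: le_imp_inverse_le)
      have "norm (ms m - ms n)^2 < e^2" using cb[of m n] i1 i2 N by linarith
      then show "norm (ms m - ms n) < e" using e by (simp add: power_less_imp_less_base)
    qed
  qed
  then obtain m where lim: "ms \<longlonglongrightarrow> m" using Cauchy_convergent_iff convergent_def by blast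
  have "m \<in> M"
  proof -
    have "cmod (f m) \<le> K * norm (m - ms n)" for n
      using bnd[of "m - ms n"] msM[of n] by (simp add: fdiff M_def)
    moreover have "(\<lambda>n. K * norm (m - ms n)) \<longlonglongrightarrow> K * norm (m - m)"
      by (intro tendsto_intros lim)
    ultimately have "cmod (f m) \<le> 0"
      by (intro tendsto_le[OF _ _ tendsto_const]) (auto)
    then show ?thesis by (simp add: M_def)
  qed
  have "norm (x0 - m)^2 \<le> D"
  proof (rule tendsto_le[OF _ _ _ always_eventually])
    show "(\<lambda>n. norm (x0 - ms n)^2) \<longlonglongrightarrow> norm (x0 - m)^2" by (intro tendsto_intros lim)
    show "(\<lambda>n. D + inverse (real (Suc n))) \<longlonglongrightarrow> D"
      using tendsto_add[OF tendsto_const LIMSEQ_inverse_real_of_nat, of D] by simp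
    show "\<forall>n. norm (x0 - ms n)^2 \<le> D + inverse (real (Suc n))" using msD less_imp_le by blast
  qed simp
  define w where "w = x0 - m"
  have fw: "f w \<noteq> 0" using \<open>m \<in> M\<close> fx0 by (simp add: w_def fdiff M_def)
  have orth: "cinner w m' = 0" if "m' \<in> M" for m'
  proof (cases "m' = 0")
    case True then show ?thesis by simp
  next
    case False
    define t where "t = cinner w m' / of_real (norm m' ^ 2)"
    have "m + scaleC t m' \<in> M" using \<open>m \<in> M\<close> that by (simp add: M_def add hom)
    then have "D \<le> norm (x0 - (m + scaleC t m'))^2" by (rule Dle)
    moreover have "x0 - (m + scaleC t m') = w - scaleC t m'" by (simp add: w_def)
    moreover have "norm (w - scaleC t m')^2 = norm w ^2 - (cmod (cinner w m'))^2 / norm m' ^ 2"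
      unfolding t_def by (rule proj_expand[OF False])
    moreover have "norm w ^ 2 \<le> D" using \<open>norm (x0 - m)^2 \<le> D\<close> by (simp add: w_def)
    ultimately have "norm w ^ 2 \<le> norm w ^2 - (cmod (cinner w m'))^2 / norm m' ^ 2"
      by simp
    then have "(cmod (cinner w m'))^2 / norm m' ^ 2 \<le> 0" by simp
    then have "(cmod (cinner w m'))^2 \<le> 0" using False by (simp add: divide_le_0_iff)
    then show ?thesis by simp
  qed
  have ww: "cinner w w \<noteq> 0" using fw f0 cinner_self_eq_0 by metis
  have cww: "cnj (cinner w w) = cinner w w" by (simp add: cinner_self)
  show ?thesis
  proof (intro exI[of _ "scaleC (cnj (f w) / cinner w w) w"] allI)
    fix x
    have "scaleC (f w) x - scaleC (f x) w \<in> M" by (simp add: M_def fdiff hom mult.commute)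
    from orth[OF this] have "cinner (scaleC (f w) x - scaleC (f x) w) w = 0"
      by (metis cinner_commute complex_cnj_zero)
    then have "f w * cinner x w = f x * cinner w w"
      by (simp add: cinner_diff_left cinner_scaleC_left)
    then show "f x = cinner x (scaleC (cnj (f w) / cinner w w) w)"
      using ww by (simp add: cinner_scaleC_right cww field_simps)
  qed
qed



lemma bop_add: "bounded_op A \<Longrightarrow> A (x + y) = A x + A y" by (simp add: bounded_op_def)
lemma bop_scaleC: "bounded_op A \<Longrightarrow> A (scaleC a x) = scaleC a (A x)" by (simp add: bounded_op_def)
lemma bop_scaleR: "bounded_op A \<Longrightarrow> A (scaleR r x) = scaleR r (A x)" by (simp add: bounded_op_def scaleR_scaleC)
lemma bop_bound: assumes "bounded_op A" obtains K where "K \<ge> 0" "\<And>x. norm (A x) \<le> norm x * K"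
proof -
  from assms obtain K where K: "\<And>x. norm (A x) \<le> norm x * K" by (auto simp: bounded_op_def)
  have "norm (A x) \<le> norm x * max K 0" for x
    using K[of x] by (meson max.cobounded1 mult_left_mono norm_ge_zero order_trans)
  then show ?thesis using that[of "max K 0"] by simp
qed
lemma bop_diff: "bounded_op A \<Longrightarrow> A (x - y) = A x - A y"
  using bop_add[of A "x - y" y] by simp
lemma bop_linear: assumes "bounded_op A" shows "bounded_linear A"
proof -
  obtain K where "K \<ge> 0" "\<And>x. norm (A x) \<le> norm x * K" using bop_bound[OF assms] by blast
  then show ?thesis by (intro bounded_linear_intro[of _ K]) (auto simp: bop_add[OF assms] bop_scaleR[OF assms])
qed

lemma cinner_ext: "(\<And>x. cinner x u = cinner x (v::'a::complex_hilbert)) \<Longrightarrow> u = v"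
proof -
  assume h: "\<And>x. cinner x u = cinner x v"
  have "cinner (u - v) (u - v) = 0" using h[of "u - v"] by (simp add: cinner_diff_right)
  then show "u = v" by (simp add: cinner_self_eq_0)
qed

lemma adj_prop:
  assumes "bounded_op (A :: 'a::complex_hilbert \<Rightarrow> 'a)"
  shows "cinner (A x) y = cinner x (adj A y)"
proof -
  obtain K where K: "K \<ge> 0" "\<And>x. norm (A x) \<le> norm x * K" using bop_bound[OF assms] by blast
  have "\<forall>y. \<exists>z. \<forall>x. cinner (A x) y = cinner x z"
  proof
    fix y
    show "\<exists>z. \<forall>x. cinner (A x) y = cinner x z"
    proof (rule riesz[where K = "K * norm y"])
      show "cinner (A (x + x')) y = cinner (A x) y + cinner (A x') y" for x x'
        by (simp add: bop_add[OF assms] cinner_add_left)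
      show "cinner (A (scaleC a x)) y = a * cinner (A x) y" for a x
        by (simp add: bop_scaleC[OF assms] cinner_scaleC_left)
      show "cmod (cinner (A x) y) \<le> K * norm y * norm x" for x
        using cauchy_schwarz[of "A x" y] K(2)[of x]
        by (smt (verit) mult.commute mult.left_commute mult_right_mono norm_ge_zero)
    qed
  qed
  then have "\<exists>B. \<forall>x y. cinner (A x) y = cinner x (B y)" by metis
  then show ?thesis unfolding adj_def by (rule someI_ex[where P = "\<lambda>B. \<forall>x y. cinner (A x) y = cinner x (B y)", THEN spec, THEN spec])
qed

lemma adj_prop2:
  assumes "bounded_op (A :: 'a::complex_hilbert \<Rightarrow> 'a)"
  shows "cinner (adj A y) x = cinner y (A x)"
  by (metis adj_prop[OF assms] cinner_commute)

lemma adj_bop: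
  assumes a: "bounded_op (A :: 'a::complex_hilbert \<Rightarrow> 'a)"
  shows "bounded_op (adj A)"
  unfolding bounded_op_def
proof (intro conjI allI)
  fix y y'
  show "adj A (y + y') = adj A y + adj A y'"
    by (rule cinner_ext[symmetric]) (simp add: adj_prop[OF a, symmetric] cinner_add_right)
next
  fix c y
  show "adj A (scaleC c y) = scaleC c (adj A y)"
    by (rule cinner_ext[symmetric]) (simp add: adj_prop[OF a, symmetric] cinner_scaleC_right)
next
  obtain K where K: "K \<ge> 0" "\<And>x. norm (A x) \<le> norm x * K" using bop_bound[OF a] by blast
  have "norm (adj A y) \<le> norm y * K" for y
  proof -
    have "norm (adj A y) ^ 2 = Re (cinner (adj A y) (adj A y))" by (simp add: cinner_self)
    also have "\<dots> = Re (cinner (A (adj A y)) y)" by (simp add: adj_prop[OF a])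
    also have "\<dots> \<le> cmod (cinner (A (adj A y)) y)" by (rule complex_Re_le_cmod)
    also have "\<dots> \<le> norm (A (adj A y)) * norm y" by (rule cauchy_schwarz)
    also have "\<dots> \<le> norm (adj A y) * K * norm y" by (rule mult_right_mono[OF K(2)]) simp
    finally have "norm (adj A y) * norm (adj A y) \<le> norm (adj A y) * (norm y * K)"
      by (simp add: power2_eq_square mult_ac)
    then show ?thesis
      by (cases "adj A y = 0") (auto simp: K)
  qed
  then show "\<exists>K. \<forall>x. norm (adj A x) \<le> norm x * K" by blast
qed



lemma adjoint_norm:
  fixes X Y :: "'a::complex_hilbert \<Rightarrow> 'a"
  assumes adj: "\<And>x y. cinner (X x) y = cinner x (Y y)" and k: "\<And>x. norm (X x) \<le> k * norm x" "k \<ge> 0"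
  shows "norm (Y y) \<le> k * norm y"
proof -
  have "norm (Y y) ^ 2 = Re (cinner (Y y) (Y y))" by (simp add: cinner_self)
  also have "\<dots> = Re (cinner (X (Y y)) y)" by (simp add: adj)
  also have "\<dots> \<le> cmod (cinner (X (Y y)) y)" by (rule complex_Re_le_cmod)
  also have "\<dots> \<le> norm (X (Y y)) * norm y" by (rule cauchy_schwarz)
  also have "\<dots> \<le> k * norm (Y y) * norm y" by (rule mult_right_mono[OF k(1)]) simp
  finally have "norm (Y y) * norm (Y y) \<le> norm (Y y) * (k * norm y)"
    by (simp add: power2_eq_square mult_ac)
  then show ?thesis using k(2)
    by (cases "Y y = 0") auto
qed

lemma unit_pair:
  fixes u v :: "'a::complex_hilbert"
  assumes "u \<noteq> 0" "v \<noteq> 0" "cmod c = 1"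
  shows "norm2 (scaleC c (scaleR (1/(sqrt 2 * norm u)) u), scaleR (1/(sqrt 2 * norm v)) v) = 1"
    and "cinner (scaleR (1/(sqrt 2 * norm v)) u) (scaleC c (scaleR (1/(sqrt 2 * norm u)) u))
          = cnj c * of_real (norm u / (2 * norm v))"
proof -
  have s2: "sqrt 2 * sqrt 2 = (2::real)" by simp
  have "norm (scaleC c (scaleR (1/(sqrt 2 * norm u)) u)) ^ 2 = 1/2"
    using assms by (simp add: norm_scaleC power_mult_distrib power_divide)
  moreover have "norm (scaleR (1/(sqrt 2 * norm v)) v) ^ 2 = 1/2"
    using assms by (simp add: power_mult_distrib power_divide)
  ultimately show "norm2 (scaleC c (scaleR (1/(sqrt 2 * norm u)) u), scaleR (1/(sqrt 2 * norm v)) v) = 1"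
    by (simp add: norm2_def)
  have "cinner (scaleR (1/(sqrt 2 * norm v)) u) (scaleC c (scaleR (1/(sqrt 2 * norm u)) u))
     = cnj c * (of_real (1/(sqrt 2 * norm v)) * of_real (1/(sqrt 2 * norm u)) * of_real (norm u ^ 2))"
    by (simp add: cinner_scaleC_right cinner_scaleR_left cinner_scaleR_right cinner_self mult_ac)
  also have "(1/(sqrt 2 * norm v)) * (1/(sqrt 2 * norm u)) * (norm u ^ 2) = norm u / (2 * norm v)"
    using assms by (simp add: field_simps power2_eq_square)
  then have "of_real (1/(sqrt 2 * norm v)) * of_real (1/(sqrt 2 * norm u)) * of_real (norm u ^ 2)
      = (of_real (norm u / (2 * norm v)) :: complex)" by (metis of_real_mult)
  finally show "cinner (scaleR (1/(sqrt 2 * norm v)) u) (scaleC c (scaleR (1/(sqrt 2 * norm u)) u))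
          = cnj c * of_real (norm u / (2 * norm v))" .
qed



theorem mainTheorem8:
  fixes B C :: "'a::complex_hilbert \<Rightarrow> 'a"
  assumes "bounded_op B" and "bounded_op C"
  shows "numrad2 (opmatrix (\<lambda>_. 0) B C (\<lambda>_. 0)) ^ 2
           \<ge> 1 / (4 * sqrt 2) *
             sqrt (onorm (\<lambda>x. B x + adj C x) ^ 4 + onorm (\<lambda>x. B x - adj C x) ^ 4)
       \<and> 1 / (4 * sqrt 2) *
             sqrt (onorm (\<lambda>x. B x + adj C x) ^ 4 + onorm (\<lambda>x. B x - adj C x) ^ 4)
           \<ge> 1 / 4 * max (onorm (\<lambda>x. adj B (B x) + C (adj C x)))
                         (onorm (\<lambda>x. B (adj B x) + adj C (C x)))"
proof -
  note bB = assms(1) and bC = assms(2)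
  have bBa: "bounded_op (adj B)" by (rule adj_bop[OF bB])
  have bCa: "bounded_op (adj C)" by (rule adj_bop[OF bC])
  define T where "T = opmatrix (\<lambda>_. 0) B C (\<lambda>_. 0)"
  define S where "S = (\<lambda>x. B x + adj C x)"
  define R where "R = (\<lambda>x. B x - adj C x)"
  define S' where "S' = (\<lambda>x. adj B x + C x)"
  define R' where "R' = (\<lambda>x. adj B x - C x)"
  define a where "a = onorm S"
  define b where "b = onorm R"
  define w where "w = numrad2 T"
  have blS: "bounded_linear S" unfolding S_def by (intro bounded_linear_add bop_linear bB bCa)
  have blR: "bounded_linear R" unfolding R_def by (intro bounded_linear_sub bop_linear bB bCa)
  have a0: "a \<ge> 0" unfolding a_def by (rule onorm_pos_le[OF blS])
  have b0: "b \<ge> 0" unfolding b_def by (rule onorm_pos_le[OF blR])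
  have Sa: "norm (S x) \<le> a * norm x" for x unfolding a_def by (rule onorm[OF blS])
  have Rb: "norm (R x) \<le> b * norm x" for x unfolding b_def by (rule onorm[OF blR])
  have Sscale: "S (scaleR r x) = scaleR r (S x)" for r x
    by (simp add: S_def bop_scaleR[OF bB] bop_scaleR[OF bCa] scaleR_right_distrib)
  have Rscale: "R (scaleR r x) = scaleR r (R x)" for r x
    by (simp add: R_def bop_scaleR[OF bB] bop_scaleR[OF bCa] scaleR_right_diff_distrib)
  have form: "inner2 (T (x1, x2)) (x1, x2) = cinner (B x2) x1 + cnj (cinner (adj C x2) x1)" for x1 x2
    by (simp add: T_def opmatrix_def inner2_def adj_prop[OF bC] cinner_commute[of x1])
  have formRe: "Re (inner2 (T (x1, x2)) (x1, x2)) = Re (cinner (S x2) x1)" for x1 x2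
    by (simp add: form S_def cinner_add_left)
  have formIm: "Im (inner2 (T (x1, x2)) (x1, x2)) = Im (cinner (R x2) x1)" for x1 x2
    by (simp add: form R_def cinner_diff_left)
  obtain KB where KB: "KB \<ge> 0" "\<And>x. norm (B x) \<le> norm x * KB" using bop_bound[OF bB] by blast
  obtain KC where KC: "KC \<ge> 0" "\<And>x. norm (adj C x) \<le> norm x * KC" using bop_bound[OF bCa] by blast
  have bdd: "bdd_above ((\<lambda>x. cmod (inner2 (T x) x)) ` {x. norm2 x = 1})"
  proof (rule bdd_aboveI2[of _ _ "KB + KC"], clarify)
    fix x1 x2 :: 'a assume "norm2 (x1, x2) = 1"
    then have n: "norm x1 ^ 2 + norm x2 ^ 2 = 1" by (simp add: norm2_def)
    have "norm x1 ^ 2 \<le> 1" using n zero_le_power2[of "norm x2"] by linarith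
    then have n1: "norm x1 \<le> 1" by (simp add: abs_square_le_1)
    have "norm x2 ^ 2 \<le> 1" using n zero_le_power2[of "norm x1"] by linarith
    then have n2: "norm x2 \<le> 1" by (simp add: abs_square_le_1)
    have "cmod (inner2 (T (x1, x2)) (x1, x2)) \<le> cmod (cinner (B x2) x1) + cmod (cinner (adj C x2) x1)"
      unfolding form by (metis complex_mod_cnj norm_triangle_ineq)
    also have "\<dots> \<le> norm (B x2) * norm x1 + norm (adj C x2) * norm x1"
      by (intro add_mono cauchy_schwarz)
    also have "\<dots> \<le> (norm x2 * KB) * 1 + (norm x2 * KC) * 1"
      by (intro add_mono mult_mono KB KC n1) (auto intro: mult_nonneg_nonneg KB KC)
    also have "\<dots> \<le> 1 * KB + 1 * KC"
      using mult_right_mono[OF n2 KB(1)] mult_right_mono[OF n2 KC(1)] by simp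
    finally show "cmod (inner2 (T (x1, x2)) (x1, x2)) \<le> KB + KC" by simp
  qed
  have upper: "cmod (inner2 (T x) x) \<le> w" if "norm2 x = 1" for x
    unfolding w_def numrad2_def by (rule cSUP_upper[OF _ bdd]) (use that in auto)
  have w0: "w \<ge> 0" if "v \<noteq> (0::'a)" for v
  proof -
    have "norm2 (scaleR (1 / norm v) v, 0) = 1" using that by (simp add: norm2_def)
    from upper[OF this] show ?thesis by (meson norm_ge_zero order_trans)
  qed
  have Sw: "norm (S v) \<le> 2 * w * norm v" for v
  proof (cases "v = 0")
    case True then show ?thesis using blS by (simp add: linear_simps(3) bounded_linear.linear)
  next
    case False
    note w0 = w0[OF False]
    show ?thesis
    proof (cases "S v = 0")
      case True then show ?thesis using w0 by simp
    next
      case Sv: False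
      have u: "cmod 1 = 1" by simp
      note up = upper[OF unit_pair(1)[OF Sv False u]]
      define p where "p = (scaleC 1 (scaleR (1/(sqrt 2 * norm (S v))) (S v)), scaleR (1/(sqrt 2 * norm v)) v)"
      have "norm (S v) / (2 * norm v) = Re (inner2 (T p) p)"
        unfolding p_def formRe Sscale unit_pair(2)[OF Sv False u] by simp
      also have "\<dots> \<le> cmod (inner2 (T p) p)" by (rule complex_Re_le_cmod)
      also have "\<dots> \<le> w" using up unfolding p_def .
      finally have "norm (S v) / (2 * norm v) \<le> w" .
      then show ?thesis using False by (simp add: field_simps)
    qed
  qed
  have Rw: "norm (R v) \<le> 2 * w * norm v" for v
  proof (cases "v = 0")
    case True then show ?thesis using blR by (simp add: linear_simps(3) bounded_linear.linear)
  next
    case False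
    note w0 = w0[OF False]
    show ?thesis
    proof (cases "R v = 0")
      case True then show ?thesis using w0 by simp
    next
      case Rv: False
      have u: "cmod \<i> = 1" by simp
      note up = upper[OF unit_pair(1)[OF Rv False u]]
      define p where "p = (scaleC \<i> (scaleR (1/(sqrt 2 * norm (R v))) (R v)), scaleR (1/(sqrt 2 * norm v)) v)"
      have "norm (R v) / (2 * norm v) = - Im (inner2 (T p) p)"
        unfolding p_def formIm Rscale unit_pair(2)[OF Rv False u] by simp
      also have "\<dots> \<le> cmod (inner2 (T p) p)" using abs_Im_le_cmod[of "inner2 (T p) p"] by linarith
      also have "\<dots> \<le> w" using up unfolding p_def .
      finally have "norm (R v) / (2 * norm v) \<le> w" .
      then show ?thesis using False by (simp add: field_simps)
    qed
  qed
  have first: "1/(4 * sqrt 2) * sqrt (a^4 + b^4) \<le> w^2"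
  proof (cases "\<exists>v::'a. v \<noteq> 0")
    case True
    then obtain v :: 'a where "v \<noteq> 0" by blast
    note w0 = w0[OF this]
    have aw: "a \<le> 2 * w" unfolding a_def using onorm_bound[of "2*w" S] Sw w0 by auto
    have bw: "b \<le> 2 * w" unfolding b_def using onorm_bound[of "2*w" R] Rw w0 by auto
    have "a^4 \<le> (2*w)^4" by (rule power_mono[OF aw a0])
    moreover have "b^4 \<le> (2*w)^4" by (rule power_mono[OF bw b0])
    ultimately have "a^4 + b^4 \<le> (4 * sqrt 2 * w^2)^2"
      by (simp add: power_mult_distrib) 
    then have "sqrt (a^4 + b^4) \<le> sqrt ((4 * sqrt 2 * w^2)^2)" by (rule real_sqrt_le_mono)
    also have "\<dots> = 4 * sqrt 2 * w^2" by simp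
    finally show ?thesis by (simp add: field_simps)
  next
    case False
    then have "S = (\<lambda>_. 0)" "R = (\<lambda>_. 0)" by auto
    then have "a = 0" "b = 0" unfolding a_def b_def by (simp_all add: onorm_zero)
    then show ?thesis by simp
  qed
  have adjS: "cinner (S x) y = cinner x (S' y)" for x y
    by (simp add: S_def S'_def cinner_add_left cinner_add_right adj_prop[OF bB] adj_prop2[OF bC])
  have adjR: "cinner (R x) y = cinner x (R' y)" for x y
    by (simp add: R_def R'_def cinner_diff_left cinner_diff_right adj_prop[OF bB] adj_prop2[OF bC])
  have S'a: "norm (S' y) \<le> a * norm y" for y by (rule adjoint_norm[OF adjS Sa a0])
  have R'b: "norm (R' y) \<le> b * norm y" for y by (rule adjoint_norm[OF adjR Rb b0])
  have P1: "norm (adj B (B x) + C (adj C x)) \<le> (a^2 + b^2) / 2 * norm x" for x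
  proof -
    have e: "(adj B (B x) + C (adj C x)) + (adj B (B x) + C (adj C x)) = S' (S x) + R' (R x)"
      by (simp add: S_def R_def S'_def R'_def bop_add[OF bBa] bop_add[OF bC] bop_diff[OF bBa] bop_diff[OF bC] algebra_simps)
    have "2 * norm (adj B (B x) + C (adj C x)) = norm (S' (S x) + R' (R x))"
      by (simp flip: e add: scaleR_2[symmetric])
    also have "\<dots> \<le> norm (S' (S x)) + norm (R' (R x))" by (rule norm_triangle_ineq)
    also have "\<dots> \<le> a * norm (S x) + b * norm (R x)" by (intro add_mono S'a R'b)
    also have "\<dots> \<le> a * (a * norm x) + b * (b * norm x)"
      by (intro add_mono mult_left_mono Sa Rb a0 b0)
    finally show ?thesis by (simp add: power2_eq_square field_simps)
  qed
  have P2: "norm (B (adj B x) + adj C (C x)) \<le> (a^2 + b^2) / 2 * norm x" for x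
  proof -
    have e: "(B (adj B x) + adj C (C x)) + (B (adj B x) + adj C (C x)) = S (S' x) + R (R' x)"
      by (simp add: S_def R_def S'_def R'_def bop_add[OF bB] bop_add[OF bCa] bop_diff[OF bB] bop_diff[OF bCa] algebra_simps)
    have "2 * norm (B (adj B x) + adj C (C x)) = norm (S (S' x) + R (R' x))"
      by (simp flip: e add: scaleR_2[symmetric])
    also have "\<dots> \<le> norm (S (S' x)) + norm (R (R' x))" by (rule norm_triangle_ineq)
    also have "\<dots> \<le> a * norm (S' x) + b * norm (R' x)" by (intro add_mono Sa Rb)
    also have "\<dots> \<le> a * (a * norm x) + b * (b * norm x)"
      by (intro add_mono mult_left_mono S'a R'b a0 b0)
    finally show ?thesis by (simp add: power2_eq_square field_simps)
  qed
  have ab0: "0 \<le> (a^2 + b^2) / 2" by simp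
  have o1: "onorm (\<lambda>x. adj B (B x) + C (adj C x)) \<le> (a^2 + b^2) / 2" by (rule onorm_bound[OF ab0 P1])
  have o2: "onorm (\<lambda>x. B (adj B x) + adj C (C x)) \<le> (a^2 + b^2) / 2" by (rule onorm_bound[OF ab0 P2])
  have "(a^2 + b^2)^2 \<le> 2 * (a^4 + b^4)"
    using zero_le_power2[of "a^2 - b^2"] by (simp add: power2_eq_square power4_eq_xxxx algebra_simps)
  then have "sqrt ((a^2 + b^2)^2) \<le> sqrt (2 * (a^4 + b^4))" by (rule real_sqrt_le_mono)
  moreover have "sqrt (2 * (a^4 + b^4)) = sqrt 2 * sqrt (a^4 + b^4)" by (rule real_sqrt_mult)
  moreover have "sqrt ((a^2 + b^2)^2) = a^2 + b^2" by simp
  ultimately have ab: "a^2 + b^2 \<le> sqrt 2 * sqrt (a^4 + b^4)" by simp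
  have s2: "sqrt 2 * sqrt 2 = (2::real)" by simp
  have second: "1/4 * max (onorm (\<lambda>x. adj B (B x) + C (adj C x))) (onorm (\<lambda>x. B (adj B x) + adj C (C x)))
     \<le> 1 / (4 * sqrt 2) * sqrt (a^4 + b^4)"
  proof -
    have "1/4 * max (onorm (\<lambda>x. adj B (B x) + C (adj C x))) (onorm (\<lambda>x. B (adj B x) + adj C (C x)))
       \<le> 1/4 * ((a^2 + b^2) / 2)" using o1 o2 by simp
    also have "\<dots> \<le> 1/4 * (sqrt 2 * sqrt (a^4 + b^4) / 2)" using ab by simp
    also have "\<dots> = 1 / (4 * sqrt 2) * sqrt (a^4 + b^4)"
      by (simp add: field_simps)
    finally show ?thesis .
  qed
  show ?thesis using first second unfolding w_def T_def a_def b_def S_def R_def by simp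
qed

end
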